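(* Let $n\geq 3$ and let $L^B$ be a blow-up of the Boolean lattice $L\cong \mathbf{2}^n$. Then \[ \operatorname{sdim}_M\bigl(G^c(L^B)\bigr)=|Z^*(L^B)|-2^{n-1}+1 . \]
   Context: Blow-up: let $L\cong\mathbf{2}^n$ be the Boolean lattice (subsets of $\{1,\dots,n\}$). The blow-up $L^B$ is the lattice obtained by keeping $0$ and $1$ and replacing every element $x\in L\setminus\{0,1\}$ by a finite nonempty chain $C_x$ (of arbitrary finite length, chosen independently for each $x$), ordered as follows: within $C_x$ the chain order; for $a\in C_x$, $b\in C_y$ with $x\neq y$, $a\leq b$ iff $x\leq y$ in $L$; $0$ is below and $1$ above everything. For a bounded lattice $M$ with $0$, $Z^*(M)=\{a\in M\setminus\{0\}:\ a\wedge b=0 \text{ for some } b\neq 0\}$. The graph $G^c(M)$ (complement of the zero-divisor graph) has vertex set $Z^*(M)$, two distinct vertices $a,b$ being adjacent iff $a\wedge b\neq 0$. For a connected graph $G$, a vertex $w$ strongly resolves $u,v$ if some shortest $u$–$w$ path contains $v$ or some shortest $v$–$w$ path contains $u$; a set $W$ of vertices is a strong resolving set if every pair of distinct vertices is strongly resolved by some vertex of $W$; $\operatorname{sdim}_M(G)$ is the minimum cardinality of a strong resolving set. *)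

theory Defs
  imports Main
begin

definition is_glb :: "'a set \<Rightarrow> ('a \<Rightarrow> 'a \<Rightarrow> bool) \<Rightarrow> 'a \<Rightarrow> 'a \<Rightarrow> 'a \<Rightarrow> bool" where
  "is_glb M le a b m \<longleftrightarrow> m \<in> M \<and> le m a \<and> le m b \<and>
     (\<forall>z\<in>M. le z a \<and> le z b \<longrightarrow> le z m)"

definition meet :: "'a set \<Rightarrow> ('a \<Rightarrow> 'a \<Rightarrow> bool) \<Rightarrow> 'a \<Rightarrow> 'a \<Rightarrow> 'a" where
  "meet M le a b = (THE m. is_glb M le a b m)"

definition Zstar :: "'a set \<Rightarrow> ('a \<Rightarrow> 'a \<Rightarrow> bool) \<Rightarrow> 'a \<Rightarrow> 'a set" where
  "Zstar M le z = {a \<in> M. a \<noteq> z \<and> (\<exists>b\<in>M. b \<noteq> z \<and> meet M le a b = z)}"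

definition Gc_adj :: "'a set \<Rightarrow> ('a \<Rightarrow> 'a \<Rightarrow> bool) \<Rightarrow> 'a \<Rightarrow> 'a \<Rightarrow> 'a \<Rightarrow> bool" where
  "Gc_adj M le z a b \<longleftrightarrow> a \<in> Zstar M le z \<and> b \<in> Zstar M le z \<and> a \<noteq> b \<and> meet M le a b \<noteq> z"

text \<open>A path (walk) from u to v in the graph (V,E) given as its list of vertices;
  its length is the number of edges.\<close>
definition is_path :: "'a set \<Rightarrow> ('a \<Rightarrow> 'a \<Rightarrow> bool) \<Rightarrow> 'a list \<Rightarrow> 'a \<Rightarrow> 'a \<Rightarrow> bool" where
  "is_path V E p u v \<longleftrightarrow> p \<noteq> [] \<and> hd p = u \<and> last p = v \<and> set p \<subseteq> V \<and>
     (\<forall>i. Suc i < length p \<longrightarrow> E (p ! i) (p ! Suc i))"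

definition gdist :: "'a set \<Rightarrow> ('a \<Rightarrow> 'a \<Rightarrow> bool) \<Rightarrow> 'a \<Rightarrow> 'a \<Rightarrow> nat" where
  "gdist V E u v = (LEAST k. \<exists>p. is_path V E p u v \<and> length p = Suc k)"

definition shortest_path :: "'a set \<Rightarrow> ('a \<Rightarrow> 'a \<Rightarrow> bool) \<Rightarrow> 'a list \<Rightarrow> 'a \<Rightarrow> 'a \<Rightarrow> bool" where
  "shortest_path V E p u v \<longleftrightarrow> is_path V E p u v \<and> length p = Suc (gdist V E u v)"

definition strongly_resolves :: "'a set \<Rightarrow> ('a \<Rightarrow> 'a \<Rightarrow> bool) \<Rightarrow> 'a \<Rightarrow> 'a \<Rightarrow> 'a \<Rightarrow> bool" where
  "strongly_resolves V E w u v \<longleftrightarrow>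
     (\<exists>p. shortest_path V E p u w \<and> v \<in> set p) \<or> (\<exists>p. shortest_path V E p v w \<and> u \<in> set p)"

definition strong_resolving_set :: "'a set \<Rightarrow> ('a \<Rightarrow> 'a \<Rightarrow> bool) \<Rightarrow> 'a set \<Rightarrow> bool" where
  "strong_resolving_set V E W \<longleftrightarrow> W \<subseteq> V \<and>
     (\<forall>u\<in>V. \<forall>v\<in>V. u \<noteq> v \<longrightarrow> (\<exists>w\<in>W. strongly_resolves V E w u v))"

definition sdim :: "'a set \<Rightarrow> ('a \<Rightarrow> 'a \<Rightarrow> bool) \<Rightarrow> nat" where
  "sdim V E = (LEAST k. \<exists>W. strong_resolving_set V E W \<and> finite W \<and> card W = k)"

text \<open>L = subsets of {1..n}; each x in L - {0,1} (proper nonempty subset) is replaced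
  by the chain Mid x 0 < Mid x 1 < ... < Mid x (c x - 1).\<close>
datatype belem = Bot | Top | Mid "nat set" nat

definition proper_sub :: "nat \<Rightarrow> nat set \<Rightarrow> bool" where
  "proper_sub n x \<longleftrightarrow> x \<subseteq> {1..n} \<and> x \<noteq> {} \<and> x \<noteq> {1..n}"

definition blowup :: "nat \<Rightarrow> (nat set \<Rightarrow> nat) \<Rightarrow> belem set" where
  "blowup n c = {Bot, Top} \<union> {Mid x i | x i. proper_sub n x \<and> i < c x}"

fun ble :: "belem \<Rightarrow> belem \<Rightarrow> bool" where
  "ble Bot _ = True"
| "ble _ Top = True"
| "ble Top _ = False"
| "ble (Mid x i) Bot = False"
| "ble (Mid x i) (Mid y j) = (if x = y then i \<le> j else x \<subseteq> y)"

end

theory Submission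
  imports Defs
begin

lemma ble_refl: "ble a a"
  by (cases a) auto

lemma ble_Top[simp]: "ble b Top"
  by (cases b) auto

lemma ble_antisym: "ble a b \<Longrightarrow> ble b a \<Longrightarrow> a = b"
  by (cases a; cases b) (auto split: if_splits)

lemma meet_eqI:
  assumes "is_glb M ble a b m"
  shows "meet M ble a b = m"
  unfolding meet_def
proof (rule the_equality)
  show "is_glb M ble a b m" by fact
next
  fix m' assume "is_glb M ble a b m'"
  with assms show "m' = m" unfolding is_glb_def by (metis ble_antisym)
qed

fun sx :: "belem \<Rightarrow> nat set" where
  "sx (Mid x i) = x" | "sx Bot = {}" | "sx Top = {}"

lemma path_single: "u \<in> V \<Longrightarrow> is_path V E [u] u u"
  by (simp add: is_path_def)

lemma path_two: "u \<in> V \<Longrightarrow> w \<in> V \<Longrightarrow> E u w \<Longrightarrow> is_path V E [u, w] u w"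
  by (auto simp: is_path_def less_Suc_eq)

lemma path_three: "u \<in> V \<Longrightarrow> v \<in> V \<Longrightarrow> w \<in> V \<Longrightarrow> E u v \<Longrightarrow> E v w \<Longrightarrow> is_path V E [u, v, w] u w"
  by (auto simp: is_path_def less_Suc_eq)

lemma path_drop:
  assumes "is_path V E p u w" "k < length p"
  shows "is_path V E (drop k p) (p ! k) w"
  unfolding is_path_def
proof (intro conjI allI impI)
  show "drop k p \<noteq> []" using assms(2) by simp
  show "hd (drop k p) = p ! k" using assms(2) by (simp add: hd_drop_conv_nth)
  show "last (drop k p) = w" using assms by (simp add: is_path_def last_drop)
  show "set (drop k p) \<subseteq> V" using assms(1) set_drop_subset[of k p] by (auto simp: is_path_def)
  fix i assume "Suc i < length (drop k p)"
  then have "Suc (k + i) < length p" by simp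
  then have "E (p ! (k + i)) (p ! Suc (k + i))" using assms(1) by (simp add: is_path_def)
  then show "E (drop k p ! i) (drop k p ! Suc i)" using assms(2) by simp
qed

lemma path_cons:
  assumes "is_path V E q b w" "a \<in> V" "E a b"
  shows "is_path V E (a # q) a w"
  unfolding is_path_def
proof (intro conjI allI impI)
  show "a # q \<noteq> []" by simp
  show "hd (a # q) = a" by simp
  show "last (a # q) = w" using assms(1) by (simp add: is_path_def)
  show "set (a # q) \<subseteq> V" using assms by (simp add: is_path_def)
  fix i assume i: "Suc i < length (a # q)"
  show "E ((a # q) ! i) ((a # q) ! Suc i)"
  proof (cases i)
    case 0
    then show ?thesis using assms by (simp add: is_path_def) (metis hd_conv_nth)
  next
    case (Suc j)
    then show ?thesis using assms(1) i by (simp add: is_path_def)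
  qed
qed

lemma shortest_exists:
  assumes "is_path V E q u w"
  shows "\<exists>p. shortest_path V E p u w"
proof -
  have q: "length q = Suc (length q - 1)" using assms by (cases q) (auto simp: is_path_def)
  have "\<exists>k p. is_path V E p u w \<and> length p = Suc k" using assms q by blast
  then have "\<exists>p. is_path V E p u w \<and> length p = Suc (gdist V E u w)"
    unfolding gdist_def by (rule LeastI_ex)
  then show ?thesis unfolding shortest_path_def by blast
qed

lemma shortest_le:
  assumes "shortest_path V E p u w" "is_path V E q u w"
  shows "length p \<le> length q"
proof -
  have q: "length q = Suc (length q - 1)" using assms by (cases q) (auto simp: is_path_def)
  have "gdist V E u w \<le> length q - 1" unfolding gdist_def
    by (rule Least_le) (use assms(2) q in blast)
  then show ?thesis using assms(1) q unfolding shortest_path_def by simp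
qed

locale BU =
  fixes n :: nat and c :: "nat set \<Rightarrow> nat"
  assumes n3: "n \<ge> 3" and cpos: "\<And>x. proper_sub n x \<Longrightarrow> c x \<ge> 1"
begin

definition V where "V = {Mid x i | x i. proper_sub n x \<and> i < c x}"
definition E where "E a b \<longleftrightarrow> a \<in> V \<and> b \<in> V \<and> a \<noteq> b \<and> sx a \<inter> sx b \<noteq> {}"

lemma glb_disj:
  assumes "proper_sub n x" "proper_sub n y" "x \<inter> y = {}" "i < c x" "j < c y"
  shows "is_glb (blowup n c) ble (Mid x i) (Mid y j) Bot"
  using assms by (auto simp: is_glb_def blowup_def proper_sub_def split: if_splits; blast)

lemma glb_inter:
  assumes "proper_sub n x" "proper_sub n y" "x \<inter> y \<noteq> {}" "i < c x" "j < c y"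
  shows "\<exists>m. m \<noteq> Bot \<and> is_glb (blowup n c) ble (Mid x i) (Mid y j) m"
proof -
  consider "x = y" | "x \<subset> y" | "y \<subset> x" | "\<not> x \<subseteq> y" "\<not> y \<subseteq> x" by blast
  then show ?thesis
  proof cases
    case 1 show ?thesis
      apply (rule exI[of _ "Mid x (min i j)"])
      using assms 1 by (auto simp: is_glb_def blowup_def split: if_splits)
  next
    case 2 show ?thesis
      apply (rule exI[of _ "Mid x i"])
      using assms 2 by (auto simp: is_glb_def blowup_def split: if_splits)
  next
    case 3 show ?thesis
      apply (rule exI[of _ "Mid y j"])
      using assms 3 by (auto simp: is_glb_def blowup_def split: if_splits)
  next
    case 4
    let ?z = "x \<inter> y"
    have pz: "proper_sub n ?z" using assms(1,3) 4 by (auto simp: proper_sub_def)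
    have "c ?z \<ge> 1" by (rule cpos[OF pz])
    show ?thesis
      apply (rule exI[of _ "Mid ?z (c ?z - 1)"])
      using assms 4 pz \<open>c ?z \<ge> 1\<close> by (auto simp: is_glb_def blowup_def split: if_splits)
  qed
qed

lemma Zstar_eq: "Zstar (blowup n c) ble Bot = V"
proof
  show "Zstar (blowup n c) ble Bot \<subseteq> V"
  proof
    fix a assume a: "a \<in> Zstar (blowup n c) ble Bot"
    then obtain b where ab: "a \<in> blowup n c" "a \<noteq> Bot" "b \<in> blowup n c" "b \<noteq> Bot"
      "meet (blowup n c) ble a b = Bot" by (auto simp: Zstar_def)
    show "a \<in> V"
    proof (cases a)
      case Bot with ab show ?thesis by simp
    next
      case Top
      have "is_glb (blowup n c) ble a b b" using ab Top by (auto simp: is_glb_def ble_refl)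
      hence "meet (blowup n c) ble a b = b" by (rule meet_eqI)
      with ab show ?thesis by simp
    next
      case (Mid x i) with ab(1) show ?thesis by (auto simp: blowup_def V_def)
    qed
  qed
next
  show "V \<subseteq> Zstar (blowup n c) ble Bot"
  proof
    fix a assume "a \<in> V"
    then obtain x i where a: "a = Mid x i" "proper_sub n x" "i < c x" by (auto simp: V_def)
    let ?y = "{1..n} - x"
    have py: "proper_sub n ?y" using a(2) unfolding proper_sub_def by blast
    have cy: "0 < c ?y" using cpos[OF py] by simp
    have "is_glb (blowup n c) ble a (Mid ?y 0) Bot"
      unfolding a(1) by (rule glb_disj) (use a py cy in auto)
    then have "meet (blowup n c) ble a (Mid ?y 0) = Bot" by (rule meet_eqI)
    moreover have "Mid ?y 0 \<in> blowup n c" "a \<in> blowup n c"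
      using py cy a by (auto simp: blowup_def)
    ultimately show "a \<in> Zstar (blowup n c) ble Bot" unfolding Zstar_def using a(1) by blast
  qed
qed

lemma adj_eq: "Gc_adj (blowup n c) ble Bot = E"
proof (intro ext)
  fix a b
  show "Gc_adj (blowup n c) ble Bot a b = E a b"
  proof (cases "a \<in> V \<and> b \<in> V")
    case False then show ?thesis by (auto simp: Gc_adj_def E_def Zstar_eq)
  next
    case True
    then obtain x i y j where ab: "a = Mid x i" "proper_sub n x" "i < c x"
      "b = Mid y j" "proper_sub n y" "j < c y" by (auto simp: V_def)
    have "meet (blowup n c) ble a b \<noteq> Bot \<longleftrightarrow> x \<inter> y \<noteq> {}"
    proof (cases "x \<inter> y = {}")
      case True
      then show ?thesis using meet_eqI[OF glb_disj[OF ab(2,5) True ab(3,6)]] ab by simp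
    next
      case False
      then obtain m where "m \<noteq> Bot" "is_glb (blowup n c) ble (Mid x i) (Mid y j) m"
        using glb_inter[OF ab(2,5) False ab(3,6)] by blast
      then show ?thesis using meet_eqI ab False by metis
    qed
    then show ?thesis using True ab by (auto simp: Gc_adj_def E_def Zstar_eq)
  qed
qed

end

context BU
begin

lemma E_sym: "E a b \<Longrightarrow> E b a"
  unfolding E_def by blast

lemma V_Mid: "a \<in> V \<Longrightarrow> \<exists>x i. a = Mid x i \<and> proper_sub n x \<and> i < c x"
  by (auto simp: V_def)

lemma notE_disj: "a \<in> V \<Longrightarrow> b \<in> V \<Longrightarrow> a \<noteq> b \<Longrightarrow> \<not> E a b \<Longrightarrow> sx a \<inter> sx b = {}"
  unfolding E_def by blast

lemma mid_conn:
  assumes "a \<in> V" "b \<in> V" "a \<noteq> b" "\<not> E a b"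
  shows "\<exists>m. E a m \<and> E m b"
proof -
  obtain x i where a: "a = Mid x i" "proper_sub n x" "i < c x" using V_Mid[OF assms(1)] by blast
  obtain y j where b: "b = Mid y j" "proper_sub n y" "j < c y" using V_Mid[OF assms(2)] by blast
  have dj: "x \<inter> y = {}" using notE_disj[OF assms] a b by simp
  obtain e where e: "e \<in> x" using a(2) unfolding proper_sub_def by blast
  obtain f where f: "f \<in> y" using b(2) unfolding proper_sub_def by blast
  have ef: "{e, f} \<subseteq> {1..n}" using e f a(2) b(2) unfolding proper_sub_def by blast
  have "card {e, f} \<le> 2" by (simp add: card_insert_le_m1)
  then have "{e, f} \<noteq> {1..n}" using n3 by auto
  then have p: "proper_sub n {e, f}" using ef unfolding proper_sub_def by blast
  have c0: "0 < c {e, f}" using cpos[OF p] by simp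
  let ?m = "Mid {e, f} 0"
  have mV: "?m \<in> V" using p c0 by (auto simp: V_def)
  have "?m \<noteq> a" using a f dj by auto
  moreover have "?m \<noteq> b" using b e dj by auto
  ultimately have "E a ?m" "E ?m b" using mV assms a b e f by (auto simp: E_def)
  then show ?thesis by blast
qed

lemma path_exists3:
  assumes "u \<in> V" "w \<in> V"
  shows "\<exists>q. is_path V E q u w \<and> length q \<le> 3"
proof -
  consider "u = w" | "E u w" | "u \<noteq> w" "\<not> E u w" by blast
  then show ?thesis
  proof cases
    case 1 then show ?thesis using path_single[OF assms(1), of E] by force
  next
    case 2 then show ?thesis using path_two[OF assms, of E] by force
  next
    case 3
    then obtain m where "E u m" "E m w" using mid_conn assms by blast
    then show ?thesis using path_three[OF assms(1) _ assms(2), of m E] by (force simp: E_def)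
  qed
qed

lemma shortest_hd: "shortest_path V E p u w \<Longrightarrow> p ! 0 = u"
  unfolding shortest_path_def is_path_def by (metis hd_conv_nth)

lemma shortest_last: "shortest_path V E p u w \<Longrightarrow> p ! (length p - 1) = w"
  unfolding shortest_path_def is_path_def by (metis last_conv_nth)

lemma twin_nonres:
  assumes "u \<in> V" "v \<in> V" "u \<noteq> v" "sx u = sx v" "w \<noteq> v"
    and sp: "shortest_path V E p u w" and vp: "v \<in> set p"
  shows False
proof -
  have ip: "is_path V E p u w" using sp by (simp add: shortest_path_def)
  obtain k where k: "k < length p" "p ! k = v" using vp by (auto simp: in_set_conv_nth)
  have "k \<noteq> 0" using shortest_hd[OF sp] k assms(3) by (metis)
  have "k \<noteq> length p - 1" using shortest_last[OF sp] k assms(5) by auto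
  then have k1: "Suc k < length p" using k(1) by simp
  let ?t = "p ! Suc k"
  have Evt: "E v ?t" using ip k1 k(2) by (auto simp: is_path_def)
  have pd: "is_path V E (drop (Suc k) p) ?t w" by (rule path_drop[OF ip k1])
  show False
  proof (cases "?t = u")
    case True
    then have "length p \<le> length (drop (Suc k) p)" using shortest_le[OF sp] pd by metis
    then show False using k1 by simp
  next
    case False
    then have "E u ?t" using Evt assms(1,4) unfolding E_def by auto
    then have "is_path V E (u # drop (Suc k) p) u w" using path_cons[OF pd assms(1)] by blast
    then have "length p \<le> length (u # drop (Suc k) p)" using shortest_le[OF sp] by blast
    then show False using k1 \<open>k \<noteq> 0\<close> by simp
  qed
qed

lemma disj_nonres:
  assumes "u \<in> V" "v \<in> V" "u \<noteq> v" "\<not> E u v" "w \<noteq> v"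
    and sp: "shortest_path V E p u w" and vp: "v \<in> set p"
  shows False
proof -
  have ip: "is_path V E p u w" using sp by (simp add: shortest_path_def)
  obtain k where k: "k < length p" "p ! k = v" using vp by (auto simp: in_set_conv_nth)
  have "k \<noteq> 0" using shortest_hd[OF sp] k assms(3) by (metis)
  moreover have "k \<noteq> 1"
  proof
    assume "k = 1"
    then have "E (p ! 0) (p ! 1)" using ip k by (auto simp: is_path_def)
    then show False using shortest_hd[OF sp] k \<open>k = 1\<close> assms(4) by simp
  qed
  moreover have "k \<noteq> length p - 1" using shortest_last[OF sp] k assms(5) by auto
  ultimately have l4: "length p \<ge> 4" using k(1) by linarith
  have "w \<in> V" using ip unfolding is_path_def by (metis last_in_set subsetD)
  then obtain q where "is_path V E q u w" "length q \<le> 3" using path_exists3 assms(1) by blast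
  then show False using shortest_le[OF sp] l4 by fastforce
qed

lemma nonres:
  assumes "u \<in> V" "v \<in> V" "u \<noteq> v" "w \<noteq> u" "w \<noteq> v"
    and "sx u = sx v \<or> sx u \<inter> sx v = {}"
  shows "\<not> strongly_resolves V E w u v"
proof
  assume "strongly_resolves V E w u v"
  then consider p where "shortest_path V E p u w" "v \<in> set p"
    | p where "shortest_path V E p v w" "u \<in> set p"
    unfolding strongly_resolves_def by blast
  then show False
  proof cases
    case 1
    show False
    proof (cases "sx u = sx v")
      case True then show ?thesis using twin_nonres[OF assms(1-3) True assms(5) 1] by blast
    next
      case False
      then have "\<not> E u v" using assms(6) unfolding E_def by blast
      then show ?thesis using disj_nonres[OF assms(1-3) _ assms(5) 1] by blast
    qed
  next
    case 2
    show False
    proof (cases "sx u = sx v")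
      case True then show ?thesis using twin_nonres[OF assms(2,1) _ _ assms(4) 2] assms(3) by auto
    next
      case False
      then have "\<not> E v u" using assms(6) unfolding E_def by blast
      then show ?thesis using disj_nonres[OF assms(2,1) _ _ assms(4) 2] assms(3) by auto
    qed
  qed
qed

lemma resolve_adj:
  assumes "u \<in> V" "v \<in> V" "w \<in> V" "E u v" "E v w" "\<not> E u w" "w \<noteq> u"
  shows "shortest_path V E [u, v, w] u w"
proof -
  have ip: "is_path V E [u, v, w] u w" by (rule path_three) (use assms in auto)
  obtain p where sp: "shortest_path V E p u w" using shortest_exists[OF ip] by blast
  have "length p \<le> 3" using shortest_le[OF sp ip] by simp
  moreover have "length p \<noteq> 0" using sp by (auto simp: shortest_path_def is_path_def)
  moreover have "length p \<noteq> 1"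
    using shortest_hd[OF sp] shortest_last[OF sp] assms(7) by fastforce
  moreover have "length p \<noteq> 2"
  proof
    assume l: "length p = 2"
    then have "E (p ! 0) (p ! 1)" using sp by (auto simp: shortest_path_def is_path_def)
    then show False using shortest_hd[OF sp] shortest_last[OF sp] l assms(6) by simp
  qed
  ultimately have "length p = 3" by linarith
  then have "gdist V E u w = 2" using sp by (simp add: shortest_path_def)
  then show ?thesis using ip by (simp add: shortest_path_def)
qed

lemma res_self1:
  assumes "u \<in> V" "v \<in> V"
  shows "strongly_resolves V E v u v"
proof -
  obtain q where "is_path V E q u v" using path_exists3 assms by blast
  then obtain p where sp: "shortest_path V E p u v" by (metis shortest_exists)
  then have "v \<in> set p" unfolding shortest_path_def is_path_def by (metis last_in_set)
  then show ?thesis using sp unfolding strongly_resolves_def by blast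
qed

lemma res_self2:
  assumes "u \<in> V" "v \<in> V"
  shows "strongly_resolves V E u u v"
proof -
  obtain q where "is_path V E q v u" using path_exists3 assms by blast
  then obtain p where sp: "shortest_path V E p v u" by (metis shortest_exists)
  then have "u \<in> set p" unfolding shortest_path_def is_path_def by (metis last_in_set)
  then show ?thesis using sp unfolding strongly_resolves_def by blast
qed

end

context BU
begin

definition P where "P = {x. proper_sub n x}"
definition Q where "Q = {x \<in> P. 1 \<in> x}"
definition g where "g x = {1..n} - x"

lemma finite_P: "finite P"
proof -
  have "P \<subseteq> Pow {1..n}" by (auto simp: P_def proper_sub_def)
  then show ?thesis by (rule finite_subset) simp
qed

lemma card_P: "card P = 2 ^ n - 2"
proof -
  have eq: "P = Pow {1..n} - {{}, {1..n}}" by (auto simp: P_def proper_sub_def)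
  have ne: "{} \<noteq> {1..n}" using n3 by auto
  have "card (Pow {1..n} - {{}, {1..n}}) = card (Pow {1..n}) - card {{}, {1..n::nat}}"
    by (rule card_Diff_subset) auto
  also have "\<dots> = 2 ^ n - 2" using ne by (simp add: card_Pow)
  finally show ?thesis using eq by simp
qed

lemma g_P: "x \<in> P \<Longrightarrow> g x \<in> P"
  unfolding P_def g_def proper_sub_def by blast

lemma gg: "x \<in> P \<Longrightarrow> g (g x) = x"
  unfolding P_def g_def proper_sub_def by blast

lemma inj_g: "inj_on g P"
  by (metis gg inj_onI)

lemma card_Q: "2 * card Q = card P"
proof -
  have QP: "Q \<subseteq> P" by (auto simp: Q_def)
  have one: "1 \<in> {1..n}" using n3 by simp
  have "P = Q \<union> g ` Q"
  proof
    show "P \<subseteq> Q \<union> g ` Q"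
    proof
      fix x assume x: "x \<in> P"
      show "x \<in> Q \<union> g ` Q"
      proof (cases "1 \<in> x")
        case True then show ?thesis using x by (simp add: Q_def)
      next
        case False
        then have "g x \<in> Q" using g_P[OF x] one by (simp add: Q_def g_def)
        then show ?thesis using gg[OF x] by (metis UnI2 image_eqI)
      qed
    qed
    show "Q \<union> g ` Q \<subseteq> P" using QP g_P by auto
  qed
  moreover have "Q \<inter> g ` Q = {}" by (auto simp: Q_def g_def)
  moreover have "finite Q" using QP finite_P finite_subset by blast
  moreover have "card (g ` Q) = card Q" using card_image inj_g QP inj_on_subset by blast
  ultimately show ?thesis by (metis card_Un_disjoint finite_imageI mult_2)
qed

lemma intersecting_bound:
  assumes FP: "F \<subseteq> P" and int: "\<And>A B. A \<in> F \<Longrightarrow> B \<in> F \<Longrightarrow> A \<inter> B \<noteq> {}"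
  shows "2 * card F \<le> card P"
proof -
  have fF: "finite F" using FP finite_P finite_subset by blast
  have "F \<inter> g ` F = {}"
  proof (rule ccontr)
    assume "F \<inter> g ` F \<noteq> {}"
    then obtain A where A: "A \<in> F" "g A \<in> F" by blast
    have "A \<inter> g A = {}" by (auto simp: g_def)
    then show False using int[OF A] by simp
  qed
  moreover have "card (g ` F) = card F" using card_image inj_g FP inj_on_subset by blast
  moreover have "F \<union> g ` F \<subseteq> P" using FP g_P by auto
  ultimately have "card F + card F \<le> card P"
    by (metis card_Un_disjoint card_mono fF finite_P finite_imageI)
  then show ?thesis by simp
qed

lemma finite_V: "finite V"
proof -
  have "V = (\<Union>x\<in>P. (\<lambda>i. Mid x i) ` {..<c x})" by (auto simp: V_def P_def)
  then show ?thesis using finite_P by simp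
qed

definition I where "I = (\<lambda>x. Mid x 0) ` Q"

lemma I_V: "I \<subseteq> V"
  using cpos by (force simp: I_def Q_def P_def V_def)

lemma card_I: "card I = card Q"
  unfolding I_def by (rule card_image) (auto simp: inj_on_def)

lemma W0_srs: "strong_resolving_set V E (V - I)"
  unfolding strong_resolving_set_def
proof (intro conjI ballI impI)
  show "V - I \<subseteq> V" by blast
  fix u v assume u: "u \<in> V" and v: "v \<in> V" and uv: "u \<noteq> v"
  show "\<exists>w\<in>V - I. strongly_resolves V E w u v"
  proof (cases "u \<in> I \<and> v \<in> I")
    case False
    then show ?thesis using res_self1[OF u v] res_self2[OF u v] u v by blast
  next
    case True
    then obtain x y where xy: "u = Mid x 0" "v = Mid y 0" "x \<in> Q" "y \<in> Q"
      by (auto simp: I_def)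
    have xy1: "1 \<in> x" "1 \<in> y" "proper_sub n x" "proper_sub n y" using xy by (auto simp: Q_def P_def)
    have "x \<noteq> y" using uv xy by auto
    have Euv: "E u v" using u v uv xy xy1 by (auto simp: E_def)
    have key: "\<exists>w\<in>V - I. strongly_resolves V E w a b"
      if a: "a = Mid s 0" "a \<in> V" "b = Mid t 0" "b \<in> V" "proper_sub n s" "proper_sub n t"
        "1 \<in> s" "1 \<in> t" "e \<in> t" "e \<notin> s" "E a b"
      for a b s t e
    proof -
      let ?z = "{1..n} - s"
      have pz: "proper_sub n ?z" using a(5) unfolding proper_sub_def by blast
      have cz: "0 < c ?z" using cpos[OF pz] by simp
      let ?w = "Mid ?z 0"
      have wV: "?w \<in> V" using pz cz by (auto simp: V_def)
      have wI: "?w \<notin> I" using a(7) by (auto simp: I_def Q_def)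
      have et: "e \<in> {1..n}" using a(6,9) unfolding proper_sub_def by blast
      have "?w \<noteq> a" using a(1,7) by auto
      moreover have "?w \<noteq> b" using a(3,7,8) by auto
      moreover have "E b ?w" using a wV et \<open>?w \<noteq> b\<close> by (auto simp: E_def)
      moreover have "\<not> E a ?w" using a(1) by (auto simp: E_def)
      ultimately have "shortest_path V E [a, b, ?w] a ?w"
        using resolve_adj[OF a(2,4) wV a(11)] by blast
      then have "strongly_resolves V E ?w a b" unfolding strongly_resolves_def by force
      then show ?thesis using wV wI by blast
    qed
    show ?thesis
    proof (cases "y - x = {}")
      case False
      then obtain e where "e \<in> y" "e \<notin> x" by blast
      then show ?thesis using key[OF xy(1) u xy(2) v xy1(3,4,1,2)] Euv by blast
    next
      case True
      then obtain e where "e \<in> x" "e \<notin> y" using \<open>x \<noteq> y\<close> by blast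
      then obtain w where "w \<in> V - I" "strongly_resolves V E w v u"
        using key[OF xy(2) v xy(1) u xy1(4,3,2,1)] E_sym[OF Euv] by blast
      then show ?thesis unfolding strongly_resolves_def by blast
    qed
  qed
qed

lemma lower:
  assumes W: "strong_resolving_set V E W"
  shows "card V - card Q \<le> card W"
proof -
  have WV: "W \<subseteq> V" using W by (simp add: strong_resolving_set_def)
  let ?J = "V - W"
  have J: "sx u \<noteq> sx v \<and> sx u \<inter> sx v \<noteq> {}" if uvJ: "u \<in> ?J" "v \<in> ?J" "u \<noteq> v" for u v
  proof (rule ccontr)
    assume "\<not> ?thesis"
    then have h: "sx u = sx v \<or> sx u \<inter> sx v = {}" by blast
    have uv: "u \<in> V" "v \<in> V" using uvJ by auto
    obtain w where w: "w \<in> W" "strongly_resolves V E w u v"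
      using W uv uvJ(3) unfolding strong_resolving_set_def by blast
    have "w \<noteq> u" "w \<noteq> v" using w(1) uvJ(1,2) by auto
    then show False using nonres[OF uv uvJ(3) _ _ h] w(2) by blast
  qed
  have inj: "inj_on sx ?J" by (rule inj_onI) (use J in blast)
  have FP: "sx ` ?J \<subseteq> P" by (auto simp: V_def P_def)
  have "2 * card (sx ` ?J) \<le> card P"
  proof (rule intersecting_bound[OF FP])
    fix A B assume "A \<in> sx ` ?J" "B \<in> sx ` ?J"
    then obtain u v where uv: "u \<in> ?J" "v \<in> ?J" "A = sx u" "B = sx v" by blast
    show "A \<inter> B \<noteq> {}"
    proof (cases "u = v")
      case True
      then show ?thesis using uv by (auto simp: V_def proper_sub_def)
    next
      case False then show ?thesis using J uv by blast
    qed
  qed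
  then have "card ?J \<le> card Q" using card_Q card_image[OF inj] by simp
  moreover have "card ?J = card V - card W" using WV finite_V by (meson card_Diff_subset finite_subset)
  ultimately show ?thesis by simp
qed

lemma sdim_eq: "sdim V E = card V - card Q"
proof -
  have fW0: "finite (V - I)" using finite_V by simp
  have cW0: "card (V - I) = card V - card Q"
    using card_Diff_subset[OF _ I_V] finite_V card_I finite_subset[OF I_V] by simp
  have ex: "\<exists>W. strong_resolving_set V E W \<and> finite W \<and> card W = card V - card Q"
    using W0_srs fW0 cW0 by blast
  have le: "sdim V E \<le> card V - card Q" unfolding sdim_def by (rule Least_le) (rule ex)
  have "\<exists>W. strong_resolving_set V E W \<and> finite W \<and> card W = sdim V E"
    unfolding sdim_def by (rule LeastI_ex) (use ex in blast)
  then obtain W where "strong_resolving_set V E W" "card W = sdim V E" by blast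
  then have "card V - card Q \<le> sdim V E" using lower by metis
  then show ?thesis using le by simp
qed

lemma final: "int (sdim V E) = int (card V) - 2 ^ (n - 1) + 1"
proof -
  have QV: "card Q \<le> card V" using card_I card_mono[OF finite_V I_V] by simp
  have "2 * card Q = 2 ^ n - 2" using card_Q card_P by simp
  moreover have "(2::nat) ^ n = 2 * 2 ^ (n - 1)" using n3 by (metis power_eq_if not_numeral_le_zero le_zero_eq)
  moreover have "(1::nat) \<le> 2 ^ (n - 1)" by simp
  ultimately have "card Q = 2 ^ (n - 1) - 1" by linarith
  then have "int (card Q) = 2 ^ (n - 1) - 1" by simp
  then show ?thesis using sdim_eq QV by simp
qed

end

theorem theorem3p20:
  fixes n :: nat and c :: "nat set \<Rightarrow> nat"
  assumes "n \<ge> 3"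
    and "\<And>x. proper_sub n x \<Longrightarrow> c x \<ge> 1"
  shows "int (sdim (Zstar (blowup n c) ble Bot) (Gc_adj (blowup n c) ble Bot))
         = int (card (Zstar (blowup n c) ble Bot)) - 2 ^ (n - 1) + 1"
proof -
  interpret BU n c using assms by unfold_locales
  show ?thesis using final by (simp add: Zstar_eq adj_eq)
qed

end
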